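(* Let $\mathfrak{H}:\mathcal{M}^{gen}\to\underline{\mathcal{P}}$ be a functor satisfying: (I) for every finite metric space $(X,d_X)$, $\mathfrak{H}(X,d_X)$ is a persistent set $(X,\theta_X^{\mathfrak{H}})$ with underlying set $X$, and for every morphism $f$, $\mathfrak{H}(f)=f$ as a set map; (II) for every $\delta>0$, $\mathfrak{H}(\Delta_2(\delta))=(\{p,q\},\theta)$ where $\theta(t)$ is the partition into singletons for $t<\delta$ and the single-block partition $\{\{p,q\}\}$ for $t\geq\delta$; (III) for every finite metric space $(X,d_X)$ and every $t<\mathrm{sep}(X)$, $\theta_X^{\mathfrak{H}}(t)$ is the partition of $X$ into singletons. Then $\mathfrak{H}=\mathfrak{R}$, i.e. for every finite metric space $(X,d_X)$ and every $r\geq0$, $\theta_X^{\mathfrak{H}}(r)$ is the partition of $X$ into the equivalence classes of $\sim_r$.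
   Context: $\mathcal{M}^{gen}$ is the category whose objects are finite metric spaces and whose morphisms are distance non-increasing maps. A persistent set is a pair $(X,\theta_X)$ with $X$ a finite set and $\theta_X:[0,\infty)\to\mathcal{P}(X)$ (partitions of $X$) such that $\theta_X(r)$ refines $\theta_X(s)$ whenever $r\leq s$, and for every $r$ there is $\epsilon>0$ with $\theta_X(r')=\theta_X(r)$ for all $r'\in[r,r+\epsilon]$. $\underline{\mathcal{P}}$ is the category of persistent sets whose morphisms $(X,\theta_X)\to(Y,\theta_Y)$ are set maps $f:X\to Y$ such that for every $r$, $\theta_X(r)$ refines $f^*(\theta_Y(r))$, where $f^*(P)$ is the partition of $X$ with blocks the nonempty preimages $f^{-1}(B)$, $B\in P$. $\Delta_2(\delta)$ is the metric space on $\{p,q\}$ with $d(p,q)=\delta$. $\mathrm{sep}(X)=\min_{x\neq x'}d_X(x,x')$. For $r\geq0$, $x\sim_r x'$ iff there exist $x_0=x,\ldots,x_k=x'$ in $X$ with $d_X(x_i,x_{i+1})\leq r$ for all $i$; $\mathfrak{R}(X,d_X)=(X,\theta^{\mathrm{VR}}_X)$ with $\theta^{\mathrm{VR}}_X(r)$ the partition into $\sim_r$-classes. *)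

theory Defs
  imports Complex_Main
begin

text \<open>A finite metric space: a finite carrier X with a metric d (values of d
outside X are irrelevant).\<close>
definition finite_metric_space :: "'a set \<Rightarrow> ('a \<Rightarrow> 'a \<Rightarrow> real) \<Rightarrow> bool" where
  "finite_metric_space X d \<longleftrightarrow> finite X \<and>
     (\<forall>x\<in>X. \<forall>y\<in>X. d x y \<ge> 0 \<and> (d x y = 0 \<longleftrightarrow> x = y) \<and> d x y = d y x) \<and>
     (\<forall>x\<in>X. \<forall>y\<in>X. \<forall>z\<in>X. d x z \<le> d x y + d y z)"

definition dist_nonincr :: "'a set \<Rightarrow> ('a \<Rightarrow> 'a \<Rightarrow> real) \<Rightarrow> 'a set \<Rightarrow> ('a \<Rightarrow> 'a \<Rightarrow> real) \<Rightarrow> ('a \<Rightarrow> 'a) \<Rightarrow> bool" where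
  "dist_nonincr X dX Y dY f \<longleftrightarrow> f ` X \<subseteq> Y \<and> (\<forall>x\<in>X. \<forall>x'\<in>X. dY (f x) (f x') \<le> dX x x')"

definition is_partition :: "'a set \<Rightarrow> 'a set set \<Rightarrow> bool" where
  "is_partition X P \<longleftrightarrow> \<Union>P = X \<and> {} \<notin> P \<and> (\<forall>B\<in>P. \<forall>C\<in>P. B \<noteq> C \<longrightarrow> B \<inter> C = {})"

definition refines :: "'a set set \<Rightarrow> 'a set set \<Rightarrow> bool" where
  "refines P Q \<longleftrightarrow> (\<forall>B\<in>P. \<exists>C\<in>Q. B \<subseteq> C)"

definition pullback :: "('a \<Rightarrow> 'b) \<Rightarrow> 'a set \<Rightarrow> 'b set set \<Rightarrow> 'a set set" where
  "pullback f X Q = {f -` C \<inter> X | C. C \<in> Q \<and> f -` C \<inter> X \<noteq> {}}"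

definition persistent_set :: "'a set \<Rightarrow> (real \<Rightarrow> 'a set set) \<Rightarrow> bool" where
  "persistent_set X \<theta> \<longleftrightarrow>
     (\<forall>r\<ge>0. is_partition X (\<theta> r)) \<and>
     (\<forall>r s. 0 \<le> r \<and> r \<le> s \<longrightarrow> refines (\<theta> r) (\<theta> s)) \<and>
     (\<forall>r\<ge>0. \<exists>\<epsilon>>0. \<forall>r'\<in>{r..r+\<epsilon>}. \<theta> r' = \<theta> r)"

definition pers_morphism :: "'a set \<Rightarrow> (real \<Rightarrow> 'a set set) \<Rightarrow> 'b set \<Rightarrow> (real \<Rightarrow> 'b set set) \<Rightarrow> ('a \<Rightarrow> 'b) \<Rightarrow> bool" where
  "pers_morphism X \<theta>X Y \<theta>Y f \<longleftrightarrow> f ` X \<subseteq> Y \<and> (\<forall>r\<ge>0. refines (\<theta>X r) (pullback f X (\<theta>Y r)))"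

definition sep :: "'a set \<Rightarrow> ('a \<Rightarrow> 'a \<Rightarrow> real) \<Rightarrow> real" where
  "sep X d = Min {d x x' | x x'. x \<in> X \<and> x' \<in> X \<and> x \<noteq> x'}"

definition singletons :: "'a set \<Rightarrow> 'a set set" where
  "singletons X = {{x} | x. x \<in> X}"

definition vr_equiv :: "'a set \<Rightarrow> ('a \<Rightarrow> 'a \<Rightarrow> real) \<Rightarrow> real \<Rightarrow> 'a \<Rightarrow> 'a \<Rightarrow> bool" where
  "vr_equiv X d r x x' \<longleftrightarrow> (\<exists>xs. xs \<noteq> [] \<and> hd xs = x \<and> last xs = x' \<and> set xs \<subseteq> X \<and>
       (\<forall>i. Suc i < length xs \<longrightarrow> d (xs ! i) (xs ! Suc i) \<le> r))"

definition theta_VR :: "'a set \<Rightarrow> ('a \<Rightarrow> 'a \<Rightarrow> real) \<Rightarrow> real \<Rightarrow> 'a set set" where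
  "theta_VR X d r = X // {(x, x'). vr_equiv X d r x x'}"

end

theory Submission
  imports Defs
begin

lemma fms_two: "x \<noteq> y \<Longrightarrow> \<delta> > 0 \<Longrightarrow> finite_metric_space {x,y} (\<lambda>a b. if a = b then 0 else \<delta>)"
  by (auto simp: finite_metric_space_def)

lemma vr_refl: "x \<in> X \<Longrightarrow> vr_equiv X d r x x"
  unfolding vr_equiv_def by (rule exI[of _ "[x]"]) auto

lemma vr_mem: "vr_equiv X d r x y \<Longrightarrow> x \<in> X \<and> y \<in> X"
  unfolding vr_equiv_def by (metis hd_in_set last_in_set subsetD)

lemma vr_snoc: assumes "vr_equiv X d r x a" "b \<in> X" "d a b \<le> r"
  shows "vr_equiv X d r x b"
proof -
  obtain xs where xs: "xs \<noteq> []" "hd xs = x" "last xs = a" "set xs \<subseteq> X"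
    "\<forall>i. Suc i < length xs \<longrightarrow> d (xs ! i) (xs ! Suc i) \<le> r"
    using assms(1) unfolding vr_equiv_def by blast
  have "\<forall>i. Suc i < length (xs @ [b]) \<longrightarrow> d ((xs@[b]) ! i) ((xs@[b]) ! Suc i) \<le> r"
  proof (intro allI impI)
    fix i assume i: "Suc i < length (xs @ [b])"
    show "d ((xs@[b]) ! i) ((xs@[b]) ! Suc i) \<le> r"
    proof (cases "Suc i < length xs")
      case True then show ?thesis using xs(5) by (simp add: nth_append)
    next
      case False
      then have "i = length xs - 1" "i < length xs" using i by auto
      then show ?thesis using xs(1,3) assms(3) False
        by (simp add: nth_append last_conv_nth)
    qed
  qed
  then show ?thesis unfolding vr_equiv_def using xs assms(2)
    by (intro exI[of _ "xs @ [b]"]) auto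
qed

lemma partition_quot:
  assumes P: "is_partition X P"
    and eq: "\<And>x y. x\<in>X \<Longrightarrow> y\<in>X \<Longrightarrow> (\<exists>B\<in>P. x\<in>B \<and> y\<in>B) \<longleftrightarrow> R x y"
    and mem: "\<And>x y. R x y \<Longrightarrow> x \<in> X \<and> y \<in> X"
  shows "P = X // {(x,y). R x y}"
proof -
  have blk: "B = {y. R x y}" if "B \<in> P" "x \<in> B" for B x
  proof -
    have xX: "x \<in> X" using P that unfolding is_partition_def by blast
    show ?thesis
    proof
      show "B \<subseteq> {y. R x y}"
      proof
        fix y assume "y \<in> B"
        then have "y \<in> X" using P that unfolding is_partition_def by blast
        then show "y \<in> {y. R x y}" using eq[OF xX] that \<open>y\<in>B\<close> by blast
      qed
      show "{y. R x y} \<subseteq> B"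
      proof
        fix y assume "y \<in> {y. R x y}"
        then have R: "R x y" by simp
        then have "y \<in> X" using mem by blast
        then obtain B' where "B' \<in> P" "x \<in> B'" "y \<in> B'" using eq[OF xX] R by blast
        then have "B' = B" using P that unfolding is_partition_def by blast
        then show "y \<in> B" using \<open>y \<in> B'\<close> by simp
      qed
    qed
  qed
  show ?thesis
  proof
    show "P \<subseteq> X // {(x,y). R x y}"
    proof
      fix B assume B: "B \<in> P"
      then obtain x where x: "x \<in> B" using P unfolding is_partition_def by (metis all_not_in_conv)
      then have "x \<in> X" using P B unfolding is_partition_def by blast
      then show "B \<in> X // {(x,y). R x y}" using blk[OF B x]
        unfolding quotient_def by auto
    qed
    show "X // {(x,y). R x y} \<subseteq> P"
    proof
      fix A assume "A \<in> X // {(x,y). R x y}"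
      then obtain x where x: "x \<in> X" "A = {y. R x y}" unfolding quotient_def by auto
      then obtain B where "B \<in> P" "x \<in> B" using P unfolding is_partition_def by blast
      then show "A \<in> P" using blk x by auto
    qed
  qed
qed

theorem mainTheorem9:
  fixes H :: "'a set \<Rightarrow> ('a \<Rightarrow> 'a \<Rightarrow> real) \<Rightarrow> real \<Rightarrow> 'a set set"
  assumes obj: "\<And>X d. finite_metric_space X d \<Longrightarrow> persistent_set X (H X d)"
    and morph: "\<And>X dX Y dY f. finite_metric_space X dX \<Longrightarrow> finite_metric_space Y dY \<Longrightarrow>
        dist_nonincr X dX Y dY f \<Longrightarrow> pers_morphism X (H X dX) Y (H Y dY) f"
    and two_point: "\<And>p q d \<delta> t. \<delta> > 0 \<Longrightarrow> p \<noteq> q \<Longrightarrow> finite_metric_space {p, q} d \<Longrightarrow>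
        d p q = \<delta> \<Longrightarrow> t \<ge> 0 \<Longrightarrow>
        H {p, q} d t = (if t < \<delta> then {{p}, {q}} else {{p, q}})"
    and small_scale: "\<And>X d t. finite_metric_space X d \<Longrightarrow> 0 \<le> t \<Longrightarrow> t < sep X d \<Longrightarrow>
        H X d t = singletons X"
  shows "\<forall>X d r. finite_metric_space X d \<and> r \<ge> 0 \<longrightarrow> H X d r = theta_VR X d r"
proof (intro allI impI, elim conjE)
  fix X :: "'a set" and d r assume fms: "finite_metric_space X d" and r: "(0::real) \<le> r"
  define P where "P = H X d r"
  have P: "is_partition X P" using obj[OF fms] r unfolding persistent_set_def P_def by blast
  have dsym: "\<And>a b. a \<in> X \<Longrightarrow> b \<in> X \<Longrightarrow> d a b = d b a"
    and dpos: "\<And>a b. a \<in> X \<Longrightarrow> b \<in> X \<Longrightarrow> d a b \<ge> 0"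
    and dz: "\<And>a b. a \<in> X \<Longrightarrow> b \<in> X \<Longrightarrow> d a b = 0 \<longleftrightarrow> a = b"
    using fms unfolding finite_metric_space_def by auto
  have dself: "\<And>a. a \<in> X \<Longrightarrow> d a a = 0" using dz by blast
  have finX: "finite X" using fms unfolding finite_metric_space_def by auto
  let ?S = "\<lambda>x y. \<exists>B\<in>P. x\<in>B \<and> y\<in>B"
  have Strans: "?S x z" if "?S x y" "?S y z" for x y z
    using that P unfolding is_partition_def by blast
  have step: "?S x y" if xy: "x \<in> X" "y \<in> X" "d x y \<le> r" for x y
  proof (cases "x = y")
    case True then show ?thesis using P xy unfolding is_partition_def by blast
  next
    case False
    define dd where "dd = (\<lambda>(a::'a) b. if a = b then 0 else d x y)"
    have pos: "d x y > 0" using dpos[OF xy(1,2)] dz[OF xy(1,2)] False by auto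
    have f2: "finite_metric_space {x,y} dd" unfolding dd_def using fms_two[OF False pos] .
    have dn: "dist_nonincr {x,y} dd X d id"
      unfolding dist_nonincr_def dd_def using xy dsym dpos dself by auto
    have pm: "pers_morphism {x,y} (H {x,y} dd) X (H X d) id" using morph[OF f2 fms dn] .
    have Hv: "H {x,y} dd r = {{x,y}}"
      using two_point[OF pos False f2 _ r] xy(3) unfolding dd_def by (simp add: False)
    have "refines (H {x,y} dd r) (pullback id {x,y} P)" using pm r
      unfolding pers_morphism_def P_def by blast
    then obtain C where "C \<in> pullback id {x,y} P" "{x,y} \<subseteq> C"
      unfolding refines_def Hv by auto
    then show ?thesis unfolding pullback_def by auto
  qed
  have chain: "?S (hd xs) (last xs)" if "xs \<noteq> []" "set xs \<subseteq> X"
      "\<forall>i. Suc i < length xs \<longrightarrow> d (xs ! i) (xs ! Suc i) \<le> r" for xs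
    using that
  proof (induction xs)
    case Nil then show ?case by simp
  next
    case (Cons a xs)
    show ?case
    proof (cases "xs = []")
      case True then show ?thesis using Cons.prems P unfolding is_partition_def by auto
    next
      case False
      have ih: "?S (hd xs) (last xs)"
        using Cons.IH[OF False] Cons.prems by fastforce
      have "d a (hd xs) \<le> r" using Cons.prems(3)[rule_format, of 0] False
        by (simp add: hd_conv_nth)
      then have "?S a (hd xs)" using step Cons.prems(2) False by (simp add: subset_iff)
      then show ?thesis using Strans ih False by auto
    qed
  qed
  have dir2: "?S x y" if "vr_equiv X d r x y" for x y
    using that chain unfolding vr_equiv_def by blast
  have dir1: "vr_equiv X d r x y" if xy: "x \<in> X" "y \<in> X" "?S x y" for x y
  proof (rule ccontr)
    assume nv: "\<not> vr_equiv X d r x y"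
    have xney: "x \<noteq> y" using nv vr_refl[OF xy(1)] by auto
    define C where "C = {z\<in>X. vr_equiv X d r x z}"
    define D where "D = {d a b | a b. a \<in> C \<and> b \<in> X - C}"
    have xC: "x \<in> C" using vr_refl[OF xy(1)] C_def xy by auto
    have yC: "y \<in> X - C" using nv C_def xy by auto
    have finD: "finite D"
    proof -
      have "D = (\<lambda>(a,b). d a b) ` (C \<times> (X - C))" unfolding D_def by auto
      moreover have "finite (C \<times> (X - C))" using finX C_def by auto
      ultimately show ?thesis by simp
    qed
    have Dne: "D \<noteq> {}" using xC yC D_def by auto
    define \<delta> where "\<delta> = Min D"
    have Dgt: "e > r" if eD: "e \<in> D" for e
    proof -
      obtain a b where ab: "e = d a b" "a \<in> C" "b \<in> X - C" using eD D_def by auto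
      show ?thesis
      proof (rule ccontr)
        assume "\<not> e > r"
        then have "vr_equiv X d r x b" using vr_snoc[of X d r x a b] ab C_def by auto
        then show False using ab C_def by auto
      qed
    qed
    have dgt: "\<delta> > r" unfolding \<delta>_def using finD Dne Dgt by simp
    have dle: "\<delta> \<le> d a b" if "a \<in> C" "b \<in> X - C" for a b
      unfolding \<delta>_def using finD that D_def by (intro Min_le) auto
    have pos: "\<delta> > 0" using dgt r by simp
    define dd where "dd = (\<lambda>(a::'a) b. if a = b then 0 else \<delta>)"
    define f where "f = (\<lambda>z. if z \<in> C then x else y)"
    have f2: "finite_metric_space {x,y} dd" unfolding dd_def using fms_two[OF xney pos] .
    have CX: "C \<subseteq> X" using C_def by auto
    have dn: "dist_nonincr X d {x,y} dd f"
      unfolding dist_nonincr_def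
    proof (intro conjI ballI)
      show "f ` X \<subseteq> {x,y}" unfolding f_def by auto
      fix a b assume ab: "a \<in> X" "b \<in> X"
      show "dd (f a) (f b) \<le> d a b"
      proof (cases "a \<in> C"; cases "b \<in> C")
        assume "a \<in> C" "b \<in> C" then show ?thesis using dpos[OF ab] unfolding dd_def f_def by simp
      next
        assume "a \<notin> C" "b \<notin> C" then show ?thesis using dpos[OF ab] unfolding dd_def f_def by simp
      next
        assume "a \<in> C" "b \<notin> C" then show ?thesis using dle[of a b] ab xney unfolding dd_def f_def by simp
      next
        assume "a \<notin> C" "b \<in> C" then show ?thesis using dle[of b a] ab xney dsym[OF ab] unfolding dd_def f_def by simp
      qed
    qed
    have pm: "pers_morphism X (H X d) {x,y} (H {x,y} dd) f" using morph[OF fms f2 dn] .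
    have Hv: "H {x,y} dd r = {{x},{y}}"
      using two_point[OF pos xney f2 _ r] dgt xney unfolding dd_def by simp
    have "refines P (pullback f X {{x},{y}})" using pm r
      unfolding pers_morphism_def P_def Hv[symmetric] by blast
    moreover obtain B where B: "B \<in> P" "x \<in> B" "y \<in> B" using xy(3) by blast
    ultimately obtain E where E: "E \<in> pullback f X {{x},{y}}" "B \<subseteq> E"
      unfolding refines_def by blast
    have "\<exists>C'. E = f -` C' \<inter> X \<and> C' \<in> {{x},{y}} \<and> f -` C' \<inter> X \<noteq> {}"
      using E(1) unfolding pullback_def by (simp only: mem_Collect_eq)
    then obtain C' where "C' \<in> {{x},{y}}" "E = f -` C' \<inter> X"
      by (elim exE conjE) (rule that)
    then have "B \<in> P" "x \<in> B" "y \<in> B" "C' \<in> {{x},{y}}" "B \<subseteq> f -` C' \<inter> X"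
      using B E by simp_all
    moreover have "f x = x" "f y = y" using xC yC f_def by auto
    ultimately have "x \<in> C'" "y \<in> C'" "C' \<in> {{x},{y}}" by auto
    then show False using xney by auto
  qed
  have "P = X // {(x,y). vr_equiv X d r x y}"
  proof (rule partition_quot[OF P])
    fix x y assume "x \<in> X" "y \<in> X"
    then show "(\<exists>B\<in>P. x \<in> B \<and> y \<in> B) = vr_equiv X d r x y"
      using dir1[of x y] dir2[of x y] by (intro iffI) simp_all
  next
    fix x y assume "vr_equiv X d r x y" then show "x \<in> X \<and> y \<in> X" by (rule vr_mem)
  qed
  then show "H X d r = theta_VR X d r" unfolding P_def theta_VR_def .
qed

end
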